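(* Let $((A,\cdot),N)$ be a Nijenhuis algebra and $((M,\triangleright,\triangleleft),N_M)$ a Nijenhuis bimodule over it. Then for every $n\ge0$ and every $f\in C^n_{\mathrm{Hoch}}(A;M)$ we have $d_{N,N_M}(\partial^{N,N_M}(f))=\partial^{N,N_M}(\delta_{\mathrm{Hoch}}(f))$.
   Context: Over a field of characteristic $0$. Nijenhuis algebra: associative $(A,\cdot)$ with linear $N$, $N(a)N(b)=N(N(a)b+aN(b)-N(ab))$. Nijenhuis bimodule: $A$-bimodule $(M,\triangleright,\triangleleft)$ with linear $N_M$ such that $N(a)\triangleright N_M(u)=N_M(N(a)\triangleright u+a\triangleright N_M(u)-N_M(a\triangleright u))$ and $N_M(u)\triangleleft N(a)=N_M(N_M(u)\triangleleft a+u\triangleleft N(a)-N_M(u\triangleleft a))$. $C^n_{\mathrm{Hoch}}(A;M)=\mathrm{Hom}(A^{\otimes n},M)$ ($C^0=M$), with $\delta_{\mathrm{Hoch}}(u)(a)=a\triangleright u-u\triangleleft a$ and, for $n\ge1$, $(\delta_{\mathrm{Hoch}}f)(a_1,\dots,a_{n+1})=a_1\triangleright f(a_2,\dots,a_{n+1})+\sum_{i=1}^n(-1)^if(a_1,\dots,a_ia_{i+1},\dots,a_{n+1})+(-1)^{n+1}f(a_1,\dots,a_n)\triangleleft a_{n+1}$. The map $d_{N,N_M}:\mathrm{Hom}(A^{\otimes n},M)\to\mathrm{Hom}(A^{\otimes n+1},M)$: $d_{N,N_M}(u)(a)=N(a)\triangleright u-u\triangleleft N(a)-N_M(a\triangleright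 u-u\triangleleft a)$ for $u\in M$; for $n\ge1$, $(d_{N,N_M}f)(a_1,\dots,a_{n+1})=N(a_1)\triangleright f(a_2,\dots,a_{n+1})-(-1)^nf(a_1,\dots,a_n)\triangleleft N(a_{n+1})+\sum_{i=1}^n(-1)^if(a_1,\dots,a_{i-1},N(a_i)a_{i+1}+a_iN(a_{i+1})-N(a_ia_{i+1}),\dots,a_{n+1})-N_M\big((\delta_{\mathrm{Hoch}}f)(a_1,\dots,a_{n+1})\big)$. The map $\partial^{N,N_M}:\mathrm{Hom}(A^{\otimes n},M)\to\mathrm{Hom}(A^{\otimes n},M)$: $\partial^{N,N_M}(u)=u$ for $u\in M$, and for $n\ge1$, $\partial^{N,N_M}(f)(a_1,\dots,a_n)=\sum_{S\subseteq\{1,\dots,n\}}(-1)^{|S|}N_M^{|S|}\big(f(b_1,\dots,b_n)\big)$ where $b_i=a_i$ if $i\in S$ and $b_i=N(a_i)$ if $i\notin S$. *)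

theory Defs
  imports Main "HOL.Vector_Spaces"
begin

text \<open>The bimodule M is a type 'm with scalar
  multiplication sM and actions lact (a \<triangleright> u) and ract (u \<triangleleft> a).\<close>

definition assoc_algebra :: "('k::field_char_0 \<Rightarrow> 'a::ring \<Rightarrow> 'a) \<Rightarrow> bool" where
  "assoc_algebra sA \<longleftrightarrow> Vector_Spaces.vector_space sA \<and>
     (\<forall>c a b. sA c (a * b) = sA c a * b \<and> sA c (a * b) = a * sA c b)"

definition nijenhuis_algebra :: "('k::field_char_0 \<Rightarrow> 'a::ring \<Rightarrow> 'a) \<Rightarrow> ('a \<Rightarrow> 'a) \<Rightarrow> bool" where
  "nijenhuis_algebra sA N \<longleftrightarrow> assoc_algebra sA \<and> Vector_Spaces.linear sA sA N \<and>
     (\<forall>a b. N a * N b = N (N a * b + a * N b - N (a * b)))"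

definition bimodule ::
  "('k::field_char_0 \<Rightarrow> 'a::ring \<Rightarrow> 'a) \<Rightarrow> ('k \<Rightarrow> 'm::ab_group_add \<Rightarrow> 'm) \<Rightarrow>
   ('a \<Rightarrow> 'm \<Rightarrow> 'm) \<Rightarrow> ('m \<Rightarrow> 'a \<Rightarrow> 'm) \<Rightarrow> bool" where
  "bimodule sA sM lact ract \<longleftrightarrow> assoc_algebra sA \<and> Vector_Spaces.vector_space sM \<and>
     (\<forall>u. Vector_Spaces.linear sA sM (\<lambda>a. lact a u)) \<and>
     (\<forall>a. Vector_Spaces.linear sM sM (\<lambda>u. lact a u)) \<and>
     (\<forall>u. Vector_Spaces.linear sA sM (\<lambda>a. ract u a)) \<and>
     (\<forall>a. Vector_Spaces.linear sM sM (\<lambda>u. ract u a)) \<and>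
     (\<forall>a b u. lact (a * b) u = lact a (lact b u)) \<and>
     (\<forall>a b u. ract (lact a u) b = lact a (ract u b)) \<and>
     (\<forall>a b u. ract u (a * b) = ract (ract u a) b)"

definition nijenhuis_bimodule ::
  "('k::field_char_0 \<Rightarrow> 'a::ring \<Rightarrow> 'a) \<Rightarrow> ('a \<Rightarrow> 'a) \<Rightarrow> ('k \<Rightarrow> 'm::ab_group_add \<Rightarrow> 'm) \<Rightarrow>
   ('a \<Rightarrow> 'm \<Rightarrow> 'm) \<Rightarrow> ('m \<Rightarrow> 'a \<Rightarrow> 'm) \<Rightarrow> ('m \<Rightarrow> 'm) \<Rightarrow> bool" where
  "nijenhuis_bimodule sA N sM lact ract NM \<longleftrightarrow> bimodule sA sM lact ract \<and>
     Vector_Spaces.linear sM sM NM \<and>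
     (\<forall>a u. lact (N a) (NM u) = NM (lact (N a) u + lact a (NM u) - NM (lact a u))) \<and>
     (\<forall>a u. ract (NM u) (N a) = NM (ract (NM u) a + ract u (N a) - NM (ract u a)))"

text \<open>An n-cochain f \<in> Hom(A^{\<otimes>n}, M) is represented as a function on lists; only its
  values on lists of length n matter.  For n = 0 the cochain is
  the element f [] of M.\<close>

definition multilinear ::
  "('k::field_char_0 \<Rightarrow> 'a::ab_group_add \<Rightarrow> 'a) \<Rightarrow> ('k \<Rightarrow> 'm::ab_group_add \<Rightarrow> 'm) \<Rightarrow> nat \<Rightarrow> ('a list \<Rightarrow> 'm) \<Rightarrow> bool" where
  "multilinear sA sM n f \<longleftrightarrow>
     (\<forall>as i c x y. length as = n \<longrightarrow> i < n \<longrightarrow>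
        f (as[i := sA c x + y]) = sM c (f (as[i := x])) + f (as[i := y]))"

definition sgn_pow :: "nat \<Rightarrow> 'm::ab_group_add \<Rightarrow> 'm" where
  "sgn_pow i x = (if even i then x else - x)"

text \<open>Hochschild coboundary of an n-cochain (inputs a_1..a_{n+1} are as!0..as!n).
  For n = 0 this is a \<triangleright> u - u \<triangleleft> a with u = f [].\<close>
definition hoch_delta ::
  "('a::ring \<Rightarrow> 'm::ab_group_add \<Rightarrow> 'm) \<Rightarrow> ('m \<Rightarrow> 'a \<Rightarrow> 'm) \<Rightarrow> nat \<Rightarrow> ('a list \<Rightarrow> 'm) \<Rightarrow> 'a list \<Rightarrow> 'm" where
  "hoch_delta lact ract n f as =
     lact (as ! 0) (f (drop 1 as))
     + (\<Sum>i = 1..n. sgn_pow i (f (take (i - 1) as @ [as ! (i - 1) * as ! i] @ drop (i + 1) as)))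
     + sgn_pow (n + 1) (ract (f (take n as)) (as ! n))"

definition d_NNM ::
  "('a::ring \<Rightarrow> 'a) \<Rightarrow> ('a \<Rightarrow> 'm::ab_group_add \<Rightarrow> 'm) \<Rightarrow> ('m \<Rightarrow> 'a \<Rightarrow> 'm) \<Rightarrow> ('m \<Rightarrow> 'm) \<Rightarrow>
   nat \<Rightarrow> ('a list \<Rightarrow> 'm) \<Rightarrow> 'a list \<Rightarrow> 'm" where
  "d_NNM N lact ract NM n f as =
     lact (N (as ! 0)) (f (drop 1 as))
     - sgn_pow n (ract (f (take n as)) (N (as ! n)))
     + (\<Sum>i = 1..n. sgn_pow i (f (take (i - 1) as @
          [N (as ! (i - 1)) * as ! i + as ! (i - 1) * N (as ! i) - N (as ! (i - 1) * as ! i)]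
          @ drop (i + 1) as)))
     - NM (hoch_delta lact ract n f as)"

text \<open>The map \<partial>^{N,N_M} on n-cochains (indices 0..n-1 here correspond to 1..n); for n = 0 it is
  the identity.\<close>
definition partial_NNM ::
  "('a \<Rightarrow> 'a) \<Rightarrow> ('m::ab_group_add \<Rightarrow> 'm) \<Rightarrow> nat \<Rightarrow> ('a list \<Rightarrow> 'm) \<Rightarrow> 'a list \<Rightarrow> 'm" where
  "partial_NNM N NM n f as =
     (\<Sum>S\<in>Pow {0..<n}. sgn_pow (card S)
        ((NM ^^ card S) (f (map (\<lambda>j. if j \<in> S then as ! j else N (as ! j)) [0..<n]))))"

end

theory Submission
  imports Defs
begin

definition Pm :: "('m::ab_group_add \<Rightarrow> 'm) \<Rightarrow> nat set \<Rightarrow> (nat set \<Rightarrow> 'm) \<Rightarrow> 'm" where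
  "Pm NM I F = (\<Sum>S\<in>Pow I. sgn_pow (card S) ((NM ^^ card S) (F S)))"

lemma sgn_pow_Suc: "sgn_pow (Suc i) x = - sgn_pow i x"
  by (simp add: sgn_pow_def)

lemma additive_sgn_pow: "additive (sgn_pow i)"
  by (unfold_locales) (simp add: sgn_pow_def)

lemma additive_sgn_comm: "additive g \<Longrightarrow> g (sgn_pow i x) = sgn_pow i (g x)"
  by (simp add: sgn_pow_def additive.minus)

lemma additive_funpow:
  fixes g :: "'m::ab_group_add \<Rightarrow> 'm"
  assumes "additive g" shows "additive (g ^^ k)"
proof (induction k)
  case 0 show ?case by unfold_locales simp
next
  case (Suc k) then show ?case using assms by unfold_locales (simp add: additive.add)
qed

lemma funpow_comm: "(\<And>x. p (g x) = g (p x)) \<Longrightarrow> p ((g ^^ k) x) = (g ^^ k) (p x)"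
  by (induction k) auto

lemma Pm_comm:
  assumes "additive NM" "additive p" "\<And>x. p (NM x) = NM (p x)"
  shows "p (Pm NM I F) = Pm NM I (\<lambda>S. p (F S))"
  unfolding Pm_def additive.sum[OF assms(2)]
  by (intro sum.cong refl) (simp add: additive_sgn_comm[OF assms(2)] funpow_comm[of p NM, OF assms(3)])

lemma Pm_NM: "additive NM \<Longrightarrow> NM (Pm NM I F) = Pm NM I (\<lambda>S. NM (F S))"
  by (rule Pm_comm) auto

lemma Pm_sgn: "additive NM \<Longrightarrow> sgn_pow i (Pm NM I F) = Pm NM I (\<lambda>S. sgn_pow i (F S))"
  by (rule Pm_comm) (auto simp: additive_sgn_pow additive_sgn_comm)

lemma Pm_add: "additive NM \<Longrightarrow> Pm NM I (\<lambda>S. F S + G S) = Pm NM I F + Pm NM I G"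
  unfolding Pm_def
  by (simp add: additive.add[OF additive_funpow] additive.add[OF additive_sgn_pow] sum.distrib)

lemma Pm_diff: "additive NM \<Longrightarrow> Pm NM I (\<lambda>S. F S - G S) = Pm NM I F - Pm NM I G"
  unfolding Pm_def
  by (simp add: additive.diff[OF additive_funpow] additive.diff[OF additive_sgn_pow] sum_subtractf)

lemma Pm_sum: "additive NM \<Longrightarrow> Pm NM I (\<lambda>S. \<Sum>i\<in>A. F i S) = (\<Sum>i\<in>A. Pm NM I (F i))"
  unfolding Pm_def
  by (simp add: additive.sum[OF additive_funpow] additive.sum[OF additive_sgn_pow] sum.swap[of _ A])

lemma Pm_cong: "(\<And>S. S \<subseteq> I \<Longrightarrow> F S = G S) \<Longrightarrow> Pm NM I F = Pm NM I G"
  unfolding Pm_def by (intro sum.cong refl) auto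

lemma Pm_reindex:
  assumes "inj_on h I"
  shows "Pm NM (h ` I) F = Pm NM I (\<lambda>S. F (h ` S))"
proof -
  have "Pow (h ` I) = image h ` Pow I" by (rule image_Pow_surj[symmetric]) simp
  moreover have "inj_on (image h) (Pow I)" using assms by (rule inj_on_image_Pow)
  ultimately show ?thesis unfolding Pm_def
    by (simp add: sum.reindex) (intro sum.cong refl, simp add: card_image inj_on_subset[OF assms])
qed

lemma Pm_insert:
  assumes "additive NM" "finite I" "k \<notin> I"
  shows "Pm NM (insert k I) F = Pm NM I F - NM (Pm NM I (\<lambda>S. F (insert k S)))"
proof -
  have inj: "inj_on (insert k) (Pow I)" using assms(3) by (auto simp: inj_on_def)
  have disj: "Pow I \<inter> insert k ` Pow I = {}" using assms(3) by auto
  have "Pm NM (insert k I) F = Pm NM I F +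
     (\<Sum>S\<in>Pow I. sgn_pow (card (insert k S)) ((NM ^^ card (insert k S)) (F (insert k S))))"
    unfolding Pm_def Pow_insert
    by (subst sum.union_disjoint) (use assms disj in \<open>auto simp: sum.reindex[OF inj]\<close>)
  also have "(\<Sum>S\<in>Pow I. sgn_pow (card (insert k S)) ((NM ^^ card (insert k S)) (F (insert k S))))
     = (\<Sum>S\<in>Pow I. - NM (sgn_pow (card S) ((NM ^^ card S) (F (insert k S)))))"
  proof (intro sum.cong refl)
    fix S assume "S \<in> Pow I"
    then have "card (insert k S) = Suc (card S)" using assms by (metis card_insert_disjoint finite_subset PowD in_mono)
    then show "sgn_pow (card (insert k S)) ((NM ^^ card (insert k S)) (F (insert k S))) =
        - NM (sgn_pow (card S) ((NM ^^ card S) (F (insert k S))))"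
      by (simp add: sgn_pow_Suc additive_sgn_comm[OF assms(1)])
  qed
  also have "\<dots> = - NM (Pm NM I (\<lambda>S. F (insert k S)))"
    unfolding Pm_def by (simp add: additive.sum[OF assms(1)] sum_negf)
  finally show ?thesis by simp
qed

lemma Pm_insert2:
  assumes "additive NM" "finite I" "k \<notin> I" "l \<notin> I" "k \<noteq> l"
  shows "Pm NM (insert k (insert l I)) F = Pm NM I (\<lambda>S. F S - NM (F (insert l S))
     - NM (F (insert k S)) + NM (NM (F (insert k (insert l S)))))"
  using assms
  by (simp add: Pm_insert Pm_add Pm_diff Pm_NM additive.diff[OF assms(1)])


definition sel :: "('a \<Rightarrow> 'a) \<Rightarrow> nat \<Rightarrow> nat set \<Rightarrow> 'a list \<Rightarrow> 'a list" where
  "sel N m S xs = map (\<lambda>j. if j \<in> S then xs ! j else N (xs ! j)) [0..<m]"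

definition merge :: "nat \<Rightarrow> 'a::times list \<Rightarrow> 'a list" where
  "merge p xs = take p xs @ [xs ! p * xs ! Suc p] @ drop (Suc (Suc p)) xs"

lemma length_sel[simp]: "length (sel N m S xs) = m"
  by (simp add: sel_def)

lemma nth_sel[simp]: "j < m \<Longrightarrow> sel N m S xs ! j = (if j \<in> S then xs ! j else N (xs ! j))"
  by (simp add: sel_def)

lemma partial_Pm: "partial_NNM N NM n f xs = Pm NM {0..<n} (\<lambda>S. f (sel N n S xs))"
  by (simp add: partial_NNM_def Pm_def sel_def)

lemma sel_drop:
  assumes "length as = Suc n" "\<forall>j<n. Suc j \<in> S \<longleftrightarrow> j \<in> T"
  shows "drop 1 (sel N (Suc n) S as) = sel N n T (drop 1 as)"
  using assms by (intro nth_equalityI) auto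

lemma sel_take:
  assumes "length as = Suc n" "\<forall>j<n. j \<in> S \<longleftrightarrow> j \<in> T"
  shows "take n (sel N (Suc n) S as) = sel N n T (take n as)"
  using assms by (intro nth_equalityI) auto

lemma sel_upd1:
  assumes "p \<notin> T" "p < n" "length L = n"
  shows "sel N n T (L[p := z]) = (sel N n T L)[p := N z]"
  using assms by (intro nth_equalityI) (auto simp: nth_list_update)

lemma sel_upd2:
  assumes "p < n" "length L = n"
  shows "sel N n (insert p T) (L[p := z]) = (sel N n T L)[p := z]"
  using assms by (intro nth_equalityI) (auto simp: nth_list_update)

lemma length_merge[simp]: "length xs = Suc n \<Longrightarrow> p < n \<Longrightarrow> length (merge p xs) = n"
  by (simp add: merge_def)

lemma nth_merge:
  assumes "length xs = Suc n" "p < n" "j < n"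
  shows "merge p xs ! j = (if j < p then xs ! j else if j = p then xs ! p * xs ! Suc p else xs ! Suc j)"
  using assms by (auto simp: merge_def nth_append min_def)

lemma merge_upd:
  assumes "length xs = Suc n" "p < n"
  shows "take p xs @ [x] @ drop (Suc (Suc p)) xs = (merge p xs)[p := x]"
  using assms by (intro nth_equalityI) (auto simp: nth_merge nth_list_update nth_append min_def)

lemma merge_sel:
  assumes "length as = Suc n" "p < n" "p \<notin> T"
    and "\<forall>j<n. j \<noteq> p \<longrightarrow> ((if j < p then j else Suc j) \<in> S \<longleftrightarrow> j \<in> T)"
  shows "merge p (sel N (Suc n) S as) = (sel N n T (merge p as))[p :=
     (if p \<in> S then as ! p else N (as ! p)) * (if Suc p \<in> S then as ! Suc p else N (as ! Suc p))]"
proof (intro nth_equalityI)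
  fix j assume "j < length (merge p (sel N (Suc n) S as))"
  then have j: "j < n" using assms by simp
  show "merge p (sel N (Suc n) S as) ! j = (sel N n T (merge p as))[p :=
     (if p \<in> S then as ! p else N (as ! p)) * (if Suc p \<in> S then as ! Suc p else N (as ! Suc p))] ! j"
  proof (cases "j < p")
    case True
    have "j \<in> S \<longleftrightarrow> j \<in> T" using assms(4) j True by (metis less_irrefl)
    then show ?thesis using assms True j by (auto simp: nth_merge nth_list_update)
  next
    case False
    show ?thesis
    proof (cases "j = p")
      case True then show ?thesis using assms j by (auto simp: nth_merge nth_list_update)
    next
      case False2: False
      have "Suc j \<in> S \<longleftrightarrow> j \<in> T" using assms(4) j False False2 by metis
      then show ?thesis using assms j False False2 by (auto simp: nth_merge nth_list_update)
    qed
  qed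
qed (use assms in simp)


theorem proposition3p11:
  fixes sA :: "'k::field_char_0 \<Rightarrow> 'a::ring \<Rightarrow> 'a"
    and N :: "'a \<Rightarrow> 'a"
    and sM :: "'k \<Rightarrow> 'm::ab_group_add \<Rightarrow> 'm"
    and lact :: "'a \<Rightarrow> 'm \<Rightarrow> 'm"
    and ract :: "'m \<Rightarrow> 'a \<Rightarrow> 'm"
    and NM :: "'m \<Rightarrow> 'm"
    and n :: nat
    and f :: "'a list \<Rightarrow> 'm"
    and as :: "'a list"
  assumes "nijenhuis_algebra sA N"
    and "nijenhuis_bimodule sA N sM lact ract NM"
    and "multilinear sA sM n f"
    and "length as = n + 1"
  shows "d_NNM N lact ract NM n (partial_NNM N NM n f) as
         = partial_NNM N NM (n + 1) (hoch_delta lact ract n f) as"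
proof -
  note nA = assms(1)[unfolded nijenhuis_algebra_def]
  note nB = assms(2)[unfolded nijenhuis_bimodule_def bimodule_def]
  have len: "length as = Suc n" using assms(4) by simp
  have vsA: "Vector_Spaces.vector_space sA" using nA by (simp add: assoc_algebra_def)
  have vsM: "Vector_Spaces.vector_space sM" using nB by simp
  have oneA: "\<And>x. sA 1 x = x" using vector_space.vector_space_assms(4)[OF vsA] .
  have oneM: "\<And>x. sM 1 x = x" using vector_space.vector_space_assms(4)[OF vsM] .
  have addNM: "additive NM" using nB by (simp add: Vector_Spaces.linear_iff additive_def)
  have addL: "\<And>x. additive (lact x)" using nB by (simp add: Vector_Spaces.linear_iff additive_def)
  have addR: "\<And>x. additive (\<lambda>u. ract u x)" using nB by (simp add: Vector_Spaces.linear_iff additive_def)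
  have NijL: "\<And>x u. lact (N x) (NM u) = NM (lact (N x) u + lact x (NM u) - NM (lact x u))"
    using nB by blast
  have NijR: "\<And>x u. ract (NM u) (N x) = NM (ract (NM u) x + ract u (N x) - NM (ract u x))"
    using nB by blast
  have NijA: "\<And>x y. N x * N y = N (N x * y + x * N y - N (x * y))" using nA by blast
  have fadd: "\<And>(L::'a list) p x y. length L = n \<Longrightarrow> p < n \<Longrightarrow> f (L[p := x + y]) = f (L[p := x]) + f (L[p := y])"
    using assms(3)[unfolded multilinear_def] oneA oneM by metis
  have fstar: "\<And>(L::'a list) p u v w. length L = n \<Longrightarrow> p < n \<Longrightarrow>
      f (L[p := u + v - w]) = f (L[p := u]) + f (L[p := v]) - f (L[p := w])"
  proof -
    fix L :: "'a list" and p u v w assume h: "length L = n" "p < n"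
    have "f (L[p := u + v]) = f (L[p := (u + v - w) + w])" by simp
    then have "f (L[p := u]) + f (L[p := v]) = f (L[p := u + v - w]) + f (L[p := w])"
      using fadd[OF h] by metis
    then show "f (L[p := u + v - w]) = f (L[p := u]) + f (L[p := v]) - f (L[p := w])"
      by (simp add: algebra_simps)
  qed
  define g where "g = partial_NNM N NM n f"
  define sel' where "sel' S = sel N (Suc n) S as" for S
  define H1 where "H1 S = lact (sel' S ! 0) (f (drop 1 (sel' S)))" for S
  define H2 where "H2 i S = sgn_pow i (f (merge (i - 1) (sel' S)))" for i S
  define H3 where "H3 S = sgn_pow (n + 1) (ract (f (take n (sel' S))) (sel' S ! n))" for S
  have RHS: "partial_NNM N NM (n + 1) (hoch_delta lact ract n f) as
      = Pm NM {0..<Suc n} H1 + (\<Sum>i = 1..n. Pm NM {0..<Suc n} (H2 i)) + Pm NM {0..<Suc n} H3"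
  proof -
    have "partial_NNM N NM (n + 1) (hoch_delta lact ract n f) as
        = Pm NM {0..<Suc n} (\<lambda>S. H1 S + (\<Sum>i = 1..n. H2 i S) + H3 S)"
      unfolding partial_Pm Suc_eq_plus1[symmetric]
    proof (intro Pm_cong)
      fix S
      have "(\<Sum>i = 1..n. sgn_pow i (f (take (i - 1) (sel' S) @ [sel' S ! (i - 1) * sel' S ! i]
              @ drop (i + 1) (sel' S)))) = (\<Sum>i = 1..n. H2 i S)"
      proof (intro sum.cong refl)
        fix i assume "i \<in> {1..n}"
        then obtain p where "i = Suc p" by (cases i) auto
        then show "sgn_pow i (f (take (i - 1) (sel' S) @ [sel' S ! (i - 1) * sel' S ! i]
              @ drop (i + 1) (sel' S))) = H2 i S"
          by (simp add: H2_def merge_def)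
      qed
      then show "hoch_delta lact ract n f (sel N (Suc n) S as) = H1 S + (\<Sum>i = 1..n. H2 i S) + H3 S"
        by (simp add: hoch_delta_def H1_def H3_def sel'_def)
    qed
    also have "\<dots> = Pm NM {0..<Suc n} H1 + (\<Sum>i = 1..n. Pm NM {0..<Suc n} (H2 i)) + Pm NM {0..<Suc n} H3"
      by (simp add: Pm_add[OF addNM] Pm_sum[OF addNM])
    finally show ?thesis .
  qed
  have G1: "g (drop 1 as) = Pm NM {0..<n} (\<lambda>T. f (sel N n T (drop 1 as)))"
    by (simp add: g_def partial_Pm)
  have G3: "g (take n as) = Pm NM {0..<n} (\<lambda>T. f (sel N n T (take n as)))"
    by (simp add: g_def partial_Pm)
  have C1: "Pm NM {0..<Suc n} H1 = lact (N (as ! 0)) (g (drop 1 as)) - NM (lact (as ! 0) (g (drop 1 as)))"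
  proof -
    define \<phi> where "\<phi> u = lact (N (as ! 0)) u - NM (lact (as ! 0) u)" for u
    have add\<phi>: "additive \<phi>" unfolding \<phi>_def
      by unfold_locales (simp add: additive.add[OF addL] additive.add[OF addNM])
    have com\<phi>: "\<phi> (NM u) = NM (\<phi> u)" for u
      unfolding \<phi>_def NijL by (simp add: additive.add[OF addNM] additive.diff[OF addNM])
    have e: "{0..<Suc n} = insert 0 (Suc ` {0..<n})" by (auto simp: image_iff)
    have "Pm NM {0..<Suc n} H1 = Pm NM (Suc ` {0..<n}) H1 - NM (Pm NM (Suc ` {0..<n}) (\<lambda>S. H1 (insert 0 S)))"
      unfolding e by (rule Pm_insert[OF addNM]) auto
    also have "\<dots> = Pm NM {0..<n} (\<lambda>T. H1 (Suc ` T)) - NM (Pm NM {0..<n} (\<lambda>T. H1 (insert 0 (Suc ` T))))"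
      using Pm_reindex[of Suc "{0..<n}" NM] by (simp only: inj_Suc inj_on_subset[OF inj_Suc])
    also have "\<dots> = Pm NM {0..<n} (\<lambda>T. lact (N (as ! 0)) (f (sel N n T (drop 1 as))))
        - NM (Pm NM {0..<n} (\<lambda>T. lact (as ! 0) (f (sel N n T (drop 1 as)))))"
    proof -
      have d1: "drop 1 (sel' (Suc ` T)) = sel N n T (drop 1 as)" for T
        unfolding sel'_def by (rule sel_drop[OF len]) auto
      have d2: "drop 1 (sel' (insert 0 (Suc ` T))) = sel N n T (drop 1 as)" for T
        unfolding sel'_def by (rule sel_drop[OF len]) auto
      show ?thesis unfolding H1_def d1 d2 by (simp add: sel'_def)
    qed
    also have "\<dots> = Pm NM {0..<n} (\<lambda>T. \<phi> (f (sel N n T (drop 1 as))))"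
      unfolding \<phi>_def by (simp add: Pm_NM[OF addNM] Pm_diff[OF addNM])
    also have "\<dots> = \<phi> (g (drop 1 as))"
      unfolding G1 by (rule Pm_comm[OF addNM add\<phi> com\<phi>, symmetric])
    finally show ?thesis by (simp add: \<phi>_def)
  qed
  have C3: "Pm NM {0..<Suc n} H3 = sgn_pow (n + 1) (ract (g (take n as)) (N (as ! n)))
       - NM (sgn_pow (n + 1) (ract (g (take n as)) (as ! n)))"
  proof -
    define \<psi> where "\<psi> u = sgn_pow (n + 1) (ract u (N (as ! n))) - NM (sgn_pow (n + 1) (ract u (as ! n)))" for u
    have add\<psi>: "additive \<psi>" unfolding \<psi>_def
      by unfold_locales (simp add: additive.add[OF addR] additive.add[OF addNM] additive.add[OF additive_sgn_pow])
    have com\<psi>: "\<psi> (NM u) = NM (\<psi> u)" for u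
      unfolding \<psi>_def NijR by (simp add: additive.add[OF addNM] additive.diff[OF addNM]
          additive.add[OF additive_sgn_pow] additive.diff[OF additive_sgn_pow] additive_sgn_comm[OF addNM])
    have e: "{0..<Suc n} = insert n {0..<n}" by auto
    have "Pm NM {0..<Suc n} H3 = Pm NM {0..<n} H3 - NM (Pm NM {0..<n} (\<lambda>S. H3 (insert n S)))"
      unfolding e by (rule Pm_insert[OF addNM]) auto
    also have "\<dots> = Pm NM {0..<n} (\<lambda>T. sgn_pow (n + 1) (ract (f (sel N n T (take n as))) (N (as ! n))))
        - NM (Pm NM {0..<n} (\<lambda>T. sgn_pow (n + 1) (ract (f (sel N n T (take n as))) (as ! n))))"
    proof -
      have a: "H3 T = sgn_pow (n + 1) (ract (f (sel N n T (take n as))) (N (as ! n)))" if "T \<subseteq> {0..<n}" for T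
      proof -
        have "take n (sel' T) = sel N n T (take n as)" unfolding sel'_def by (rule sel_take[OF len]) auto
        moreover have "n \<notin> T" using that by auto
        ultimately show ?thesis by (simp add: H3_def sel'_def)
      qed
      have b: "H3 (insert n T) = sgn_pow (n + 1) (ract (f (sel N n T (take n as))) (as ! n))" for T
      proof -
        have "take n (sel' (insert n T)) = sel N n T (take n as)" unfolding sel'_def by (rule sel_take[OF len]) auto
        then show ?thesis by (simp add: H3_def sel'_def)
      qed
      show ?thesis using a b by (simp add: Pm_cong[of "{0..<n}" H3])
    qed
    also have "\<dots> = Pm NM {0..<n} (\<lambda>T. \<psi> (f (sel N n T (take n as))))"
      unfolding \<psi>_def by (simp add: Pm_NM[OF addNM] Pm_diff[OF addNM])
    also have "\<dots> = \<psi> (g (take n as))"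
      unfolding G3 by (rule Pm_comm[OF addNM add\<psi> com\<psi>, symmetric])
    finally show ?thesis by (simp add: \<psi>_def)
  qed
  have C2: "Pm NM {0..<Suc n} (H2 i) =
      sgn_pow i (g (take (i - 1) as @ [N (as ! (i - 1)) * as ! i + as ! (i - 1) * N (as ! i) - N (as ! (i - 1) * as ! i)] @ drop (i + 1) as))
      - NM (sgn_pow i (g (take (i - 1) as @ [as ! (i - 1) * as ! i] @ drop (i + 1) as)))"
    if i: "i \<in> {1..n}" for i
  proof -
    obtain p where ip: "i = Suc p" and pn: "p < n" using i by (cases i) auto
    define h where "h j = (if j < p then j else Suc j)" for j
    define K where "K = {0..<n} - {p}"
    define c where "c = merge p as"
    define a where "a = as ! p"
    define b where "b = as ! Suc p"
    define LL where "LL T = sel N n T c" for T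
    have lenc: "length c = n" using len pn by (simp add: c_def)
    have cp: "c ! p = a * b" using len pn by (simp add: c_def a_def b_def nth_merge)
    have injh: "inj h" by (auto simp: inj_def h_def split: if_splits)
    have hmem: "h j \<in> h ` T \<longleftrightarrow> j \<in> T" for j T using injh by (simp add: inj_image_mem_iff)
    have hp: "h j \<noteq> p" for j by (simp add: h_def)
    have hSp: "h j = Suc p \<longleftrightarrow> j = p" for j by (simp add: h_def)
    have finK: "finite K" by (simp add: K_def)
    have eK: "{0..<Suc n} = insert p (insert (Suc p) (h ` K))"
    proof (intro set_eqI iffI)
      fix x assume "x \<in> {0..<Suc n}"
      then have x: "x < Suc n" by simp
      show "x \<in> insert p (insert (Suc p) (h ` K))"
      proof (cases "x < p")
        case True then have "h x = x" "x \<in> K" using pn by (auto simp: h_def K_def)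
        then show ?thesis by (metis image_eqI insertCI)
      next
        case False
        show ?thesis
        proof (cases "x = p \<or> x = Suc p")
          case True then show ?thesis by auto
        next
          case False2: False
          then obtain y where "x = Suc y" "y \<noteq> p" "p < y" using False by (cases x) auto
          then have "h y = x" "y \<in> K" using x by (auto simp: h_def K_def)
          then show ?thesis by (metis image_eqI insertCI)
        qed
      qed
    next
      fix x assume "x \<in> insert p (insert (Suc p) (h ` K))"
      then show "x \<in> {0..<Suc n}" using pn by (auto simp: h_def K_def)
    qed
    have ffs: "f (LL T) = f ((LL T)[p := N (a * b)])" if "T \<subseteq> K" for T
    proof -
      have "p \<notin> T" using that by (auto simp: K_def)
      then have "(LL T) ! p = N (a * b)" using pn cp by (simp add: LL_def)
      then show ?thesis by (metis list_update_id)
    qed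
    have mrg: "merge p (sel' S) = (LL T)[p := (if p \<in> S then a else N a) * (if Suc p \<in> S then b else N b)]"
      if "T \<subseteq> K" "S = X \<union> h ` T" "X \<subseteq> {p, Suc p}" for S T X
      unfolding sel'_def LL_def c_def a_def b_def
    proof (rule merge_sel[OF len pn])
      show "p \<notin> T" using that by (auto simp: K_def)
      show "\<forall>j<n. j \<noteq> p \<longrightarrow> ((if j < p then j else Suc j) \<in> S) = (j \<in> T)"
      proof (intro allI impI)
        fix j assume "j < n" "j \<noteq> p"
        then have "h j \<notin> X" using that(3) hp hSp by auto
        then show "((if j < p then j else Suc j) \<in> S) = (j \<in> T)"
          using that(2) hmem[of j T] by (auto simp: h_def[symmetric])
      qed
    qed
    have pnot: "p \<notin> h ` T" for T using hp by auto
    have Spnot: "Suc p \<notin> h ` T" if "T \<subseteq> K" for T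
    proof
      assume "Suc p \<in> h ` T"
      then obtain x where x: "x \<in> T" "Suc p = h x" by auto
      then have "x = p" using hSp by metis
      then show False using that x by (auto simp: K_def)
    qed
    define F where "F = H2 i"
    have F: "F S = sgn_pow i (f (merge p (sel' S)))" for S by (simp add: F_def H2_def ip)
    have "Pm NM {0..<Suc n} (H2 i) = Pm NM (h ` K) (\<lambda>S. F S - NM (F (insert (Suc p) S))
       - NM (F (insert p S)) + NM (NM (F (insert p (insert (Suc p) S)))))"
      unfolding eK F_def by (rule Pm_insert2[OF addNM]) (use finK pnot Spnot[of K] in auto)
    also have "\<dots> = Pm NM K (\<lambda>T. F (h ` T) - NM (F (insert (Suc p) (h ` T)))
       - NM (F (insert p (h ` T))) + NM (NM (F (insert p (insert (Suc p) (h ` T))))))"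
      by (rule Pm_reindex) (rule inj_on_subset[OF injh], simp)
    also have "\<dots> = Pm NM K (\<lambda>T. sgn_pow i (f ((LL T)[p := N a * N b]))
       - NM (sgn_pow i (f ((LL T)[p := N a * b])))
       - NM (sgn_pow i (f ((LL T)[p := a * N b])))
       + NM (NM (sgn_pow i (f ((LL T)[p := a * b])))))"
    proof (rule Pm_cong)
      fix T assume T: "T \<subseteq> K"
      have 1: "merge p (sel' (h ` T)) = (LL T)[p := N a * N b]"
        using mrg[OF T, of "h ` T" "{}"] pnot Spnot[OF T] by simp
      have 2: "merge p (sel' (insert (Suc p) (h ` T))) = (LL T)[p := N a * b]"
        using mrg[OF T, of "insert (Suc p) (h ` T)" "{Suc p}"] pnot by simp
      have 3: "merge p (sel' (insert p (h ` T))) = (LL T)[p := a * N b]"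
        using mrg[OF T, of "insert p (h ` T)" "{p}"] Spnot[OF T] by simp
      have 4: "merge p (sel' (insert p (insert (Suc p) (h ` T)))) = (LL T)[p := a * b]"
        using mrg[OF T, of "insert p (insert (Suc p) (h ` T))" "{p, Suc p}"] by simp
      show "F (h ` T) - NM (F (insert (Suc p) (h ` T)))
       - NM (F (insert p (h ` T))) + NM (NM (F (insert p (insert (Suc p) (h ` T))))) =
        sgn_pow i (f ((LL T)[p := N a * N b]))
       - NM (sgn_pow i (f ((LL T)[p := N a * b])))
       - NM (sgn_pow i (f ((LL T)[p := a * N b])))
       + NM (NM (sgn_pow i (f ((LL T)[p := a * b]))))"
        unfolding F 1 2 3 4 ..
    qed
    also have "\<dots> = sgn_pow i (g (take (i - 1) as @ [N (as ! (i - 1)) * as ! i + as ! (i - 1) * N (as ! i) - N (as ! (i - 1) * as ! i)] @ drop (i + 1) as))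
      - NM (sgn_pow i (g (take (i - 1) as @ [as ! (i - 1) * as ! i] @ drop (i + 1) as)))"
    proof -
      define st where "st = N a * b + a * N b - N (a * b)"
      have l1: "take (i - 1) as @ [N (as ! (i - 1)) * as ! i + as ! (i - 1) * N (as ! i) - N (as ! (i - 1) * as ! i)] @ drop (i + 1) as
          = c[p := st]"
        unfolding ip st_def a_def b_def c_def using merge_upd[OF len pn] by simp
      have l2: "take (i - 1) as @ [as ! (i - 1) * as ! i] @ drop (i + 1) as = c[p := a * b]"
        unfolding ip a_def b_def c_def using merge_upd[OF len pn] by simp
      have e2: "{0..<n} = insert p K" using pn by (auto simp: K_def)
      have gK: "g (c[p := z]) = Pm NM K (\<lambda>T. f (sel N n T (c[p := z])))
          - NM (Pm NM K (\<lambda>T. f (sel N n (insert p T) (c[p := z]))))" for z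
        unfolding g_def partial_Pm e2 by (rule Pm_insert[OF addNM]) (auto simp: finK K_def)
      have s1: "sel N n T (c[p := z]) = (LL T)[p := N z]" if "T \<subseteq> K" for T z
        unfolding LL_def by (rule sel_upd1) (use that pn lenc in \<open>auto simp: K_def\<close>)
      have s2: "sel N n (insert p T) (c[p := z]) = (LL T)[p := z]" for T z
        unfolding LL_def by (rule sel_upd2) (use pn lenc in auto)
      have "sgn_pow i (g (c[p := st])) - NM (sgn_pow i (g (c[p := a * b]))) =
         Pm NM K (\<lambda>T. sgn_pow i (f (sel N n T (c[p := st]))) - NM (sgn_pow i (f (sel N n (insert p T) (c[p := st]))))
            - NM (sgn_pow i (f (sel N n T (c[p := a * b])))) + NM (NM (sgn_pow i (f (sel N n (insert p T) (c[p := a * b]))))))"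
        unfolding gK by (simp add: Pm_sgn[OF addNM] Pm_NM[OF addNM] Pm_diff[OF addNM] Pm_add[OF addNM]
           additive.diff[OF addNM] additive.diff[OF additive_sgn_pow] additive_sgn_comm[OF addNM])
      also have "\<dots> = Pm NM K (\<lambda>T. sgn_pow i (f ((LL T)[p := N a * N b]))
       - NM (sgn_pow i (f ((LL T)[p := N a * b])))
       - NM (sgn_pow i (f ((LL T)[p := a * N b])))
       + NM (NM (sgn_pow i (f ((LL T)[p := a * b])))))"
      proof (rule Pm_cong)
        fix T assume T: "T \<subseteq> K"
        have lL: "length (LL T) = n" by (simp add: LL_def)
        have fs: "f ((LL T)[p := st]) = f ((LL T)[p := N a * b]) + f ((LL T)[p := a * N b]) - f ((LL T)[p := N (a * b)])"
          unfolding st_def by (rule fstar[OF lL pn])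
        show "sgn_pow i (f (sel N n T (c[p := st]))) - NM (sgn_pow i (f (sel N n (insert p T) (c[p := st]))))
            - NM (sgn_pow i (f (sel N n T (c[p := a * b])))) + NM (NM (sgn_pow i (f (sel N n (insert p T) (c[p := a * b]))))) =
            sgn_pow i (f ((LL T)[p := N a * N b]))
           - NM (sgn_pow i (f ((LL T)[p := N a * b])))
           - NM (sgn_pow i (f ((LL T)[p := a * N b])))
           + NM (NM (sgn_pow i (f ((LL T)[p := a * b]))))"
          unfolding s1[OF T] s2 fs NijA[symmetric, of a b, folded st_def] ffs[OF T, symmetric]
          using ffs[OF T]
          by (simp add: additive.diff[OF addNM] additive.add[OF addNM] additive.diff[OF additive_sgn_pow]
              additive.add[OF additive_sgn_pow] additive_sgn_comm[OF addNM])
      qed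
      finally show ?thesis unfolding l1 l2 by (simp add: st_def NijA)
    qed
    finally show ?thesis .
  qed
  have S: "(\<Sum>i = 1..n. Pm NM {0..<Suc n} (H2 i)) =
      (\<Sum>i = 1..n. sgn_pow i (g (take (i - 1) as @ [N (as ! (i - 1)) * as ! i + as ! (i - 1) * N (as ! i) - N (as ! (i - 1) * as ! i)] @ drop (i + 1) as)))
      - NM (\<Sum>i = 1..n. sgn_pow i (g (take (i - 1) as @ [as ! (i - 1) * as ! i] @ drop (i + 1) as)))"
    by (simp add: C2 sum_subtractf additive.sum[OF addNM])
  show ?thesis
    unfolding RHS C1 C3 S d_NNM_def hoch_delta_def g_def[symmetric]
    by (simp add: additive.add[OF addNM] additive.diff[OF addNM] additive.minus[OF addNM] sgn_pow_Suc algebra_simps)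
qed
end
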